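(* Under the hypotheses of the sequential gradient descent setting (see context), for every $k\in\mathbb{N}$, $$J_{k+1}(x_{k+1})\le J_k(x_{k+1})\le J_k(x_k);$$ in particular the sequence $\{J_k(x_k)\}_k$ is nonincreasing.
   Context: $Q\in\mathbb{R}^{n\times n}$ symmetric positive semidefinite, $q\in\mathbb{R}^n$, $A\in\mathbb{R}^{n\times n}$ symmetric positive definite, $v\in\mathbb{R}^n$. $f(x)=\tfrac12 x^\top Qx+q^\top x$, $g(x)=(x-v)^\top A(x-v)$, $\mathcal{C}=\{x:g(x)\le1\}$, $\partial\mathcal{C}=\{x:g(x)=1\}$, $J_k(x)=f(x)+\frac{m}{k}g(x)^k$, $L_k=\bar\sigma(Q+m(4k-2)A)$, $r=\sqrt{\underline\sigma(A)}/\bar\sigma(A)$ ($\bar\sigma,\underline\sigma$ largest/smallest singular value). Setting: $m>0$ satisfies Requirement 2, namely with $w(x)=\nabla f(x)+m\nabla g(x)$, $\|w(x)\|^2\|\nabla g(x)\|\le 2rL_1\langle w(x),\nabla g(x)\rangle$ for all $x\in\partial\mathcal{C}$; $x_1\in\mathcal{C}$; $x_{k+1}=x_k-\gamma_k\nabla J_k(x_k)$ with $0<\gamma_k\le1/L_k$, $\sum_k\gamma_k^2<\infty$, $\sum_k\gamma_k=\infty$. *)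

theory Defs
  imports "HOL-Analysis.Analysis"
begin

definition grad :: "('a::euclidean_space \<Rightarrow> real) \<Rightarrow> 'a \<Rightarrow> 'a" where
  "grad F x = (THE D. (F has_derivative (\<lambda>h. D \<bullet> h)) (at x))"

definition sigma_max :: "real^'n^'n \<Rightarrow> real" where
  "sigma_max M = onorm (\<lambda>x. M *v x)"

definition sigma_min :: "real^'n^'n \<Rightarrow> real" where
  "sigma_min M = Inf {norm (M *v x) | x. norm x = 1}"

end

theory Submission
  imports Defs
begin

lemma sym_mv:
  fixes M :: "real^'n^'n"
  assumes "transpose M = M"
  shows "x \<bullet> (M *v y) = y \<bullet> (M *v x)"
proof -
  have "x \<bullet> (M *v y) = (x v* M) \<bullet> y" by (simp add: dot_lmul_matrix)
  also have "x v* M = M *v x" using vector_transpose_matrix[of x M] assms by simp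
  finally show ?thesis by (simp add: inner_commute)
qed

lemma psd_half:
  fixes M :: "real^'n^'n"
  assumes "transpose M = M" "\<forall>y. 0 \<le> y \<bullet> (M *v y)"
  shows "2 * (x \<bullet> (M *v y)) \<le> x \<bullet> (M *v x) + y \<bullet> (M *v y)"
proof -
  have "0 \<le> (x - y) \<bullet> (M *v (x - y))" using assms(2) by blast
  also have "\<dots> = x \<bullet> (M *v x) + y \<bullet> (M *v y) - x \<bullet> (M *v y) - y \<bullet> (M *v x)"
    by (simp add: matrix_vector_mult_diff_distrib inner_diff_left inner_diff_right)
  finally show ?thesis using sym_mv[OF assms(1), of x y] by linarith
qed

lemma quad_disc:
  fixes a b c :: real
  assumes "\<forall>t. 0 \<le> a + 2*t*b + t^2*c" "0 \<le> c"
  shows "b^2 \<le> a*c"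
proof (cases "c = 0")
  case True
  show ?thesis
  proof (cases "b = 0")
    case False
    have "0 \<le> a + 2*(-(a+1)/(2*b))*b" using assms(1)[rule_format, of "-(a+1)/(2*b)"] True by simp
    then show ?thesis using False by (simp add: field_simps)
  qed (use True assms in auto)
next
  case False
  then have c: "c > 0" using assms by simp
  have "0 \<le> a + 2*(-b/c)*b + (-b/c)^2*c" using assms(1) by blast
  also have "\<dots> = (a*c - b^2)/c" using c by (simp add: field_simps power2_eq_square)
  finally show ?thesis using c by (simp add: zero_le_divide_iff)
qed

lemma psd_cs:
  fixes M :: "real^'n^'n"
  assumes "transpose M = M" "\<forall>y. 0 \<le> y \<bullet> (M *v y)"
  shows "(x \<bullet> (M *v y))^2 \<le> (x \<bullet> (M *v x)) * (y \<bullet> (M *v y))"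
proof -
  have "\<forall>t. 0 \<le> x \<bullet> (M *v x) + 2*t*(x \<bullet> (M *v y)) + t^2*(y \<bullet> (M *v y))"
  proof
    fix t :: real
    have "0 \<le> (x + t *\<^sub>R y) \<bullet> (M *v (x + t *\<^sub>R y))" using assms(2) by blast
    also have "\<dots> = x \<bullet> (M *v x) + t*(x \<bullet> (M *v y)) + t*(y \<bullet> (M *v x)) + t^2*(y \<bullet> (M *v y))"
      by (simp add: matrix_vector_right_distrib matrix_vector_mult_scaleR inner_add_left inner_add_right power2_eq_square algebra_simps)
    finally show "0 \<le> x \<bullet> (M *v x) + 2*t*(x \<bullet> (M *v y)) + t^2*(y \<bullet> (M *v y))"
      using sym_mv[OF assms(1), of x y] by simp
  qed
  then show ?thesis using quad_disc assms(2) by blast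
qed

lemma grad_eq:
  fixes F :: "'a::euclidean_space \<Rightarrow> real"
  assumes "(F has_derivative (\<lambda>h. D \<bullet> h)) (at x)"
  shows "grad F x = D"
  unfolding grad_def
proof (rule the_equality)
  fix D' assume "(F has_derivative (\<lambda>h. D' \<bullet> h)) (at x)"
  then have "(\<lambda>h. D' \<bullet> h) = (\<lambda>h. D \<bullet> h)" using has_derivative_unique assms by blast
  then have "(D' - D) \<bullet> (D' - D) = 0" by (metis inner_diff_left diff_self)
  then show "D' = D" by simp
qed (rule assms)

lemma scal:
  fixes \<alpha> \<beta> \<rho> :: real and k :: nat
  assumes "0 \<le> \<alpha>" "\<alpha> \<le> 1" "0 \<le> \<beta>" "\<beta> \<le> 1" "\<rho>^2 \<le> \<alpha>*\<beta>" "k \<ge> 1"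
  shows "2*(\<alpha>^(k-1)*(\<alpha>-\<rho>) - \<beta>^(k-1)*(\<rho>-\<beta>)) \<le> (4*real k-2)*(\<alpha> - 2*\<rho> + \<beta>)"
proof -
  define a where "a = sqrt \<alpha>"
  define b where "b = sqrt \<beta>"
  have a: "0 \<le> a" "a \<le> 1" "a^2 = \<alpha>" using assms by (auto simp: a_def)
  have b: "0 \<le> b" "b \<le> 1" "b^2 = \<beta>" using assms by (auto simp: b_def)
  have rho: "\<rho> \<le> a*b"
  proof -
    have "\<bar>\<rho>\<bar> \<le> sqrt (\<alpha>*\<beta>)" using real_le_rsqrt[of "\<bar>\<rho>\<bar>" "\<alpha>*\<beta>"] assms(5) by simp
    then show ?thesis by (simp add: a_def b_def real_sqrt_mult)
  qed
  define n where "n = 2*k - 1"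
  have n: "real n = 2*real k - 1" using assms(6) by (simp add: n_def of_nat_diff)
  have ak: "\<alpha>^(k-1) \<le> 1" "\<beta>^(k-1) \<le> 1" using assms by (auto intro: power_le_one)
  have R: "(8*real k - 4 - 2*(\<alpha>^(k-1) + \<beta>^(k-1))) * \<rho> \<le> (8*real k - 4 - 2*(\<alpha>^(k-1) + \<beta>^(k-1))) * (a*b)"
    apply (rule mult_left_mono[OF rho]) using ak assms(6) by simp
  have S: "a^n - b^n = (a - b) * (\<Sum>i<n. b^(n - Suc i) * a^i)" by (rule power_diff_sumr2)
  have S1: "(\<Sum>i<n. b^(n - Suc i) * a^i) \<le> real n"
  proof -
    have "(\<Sum>i<n. b^(n - Suc i) * a^i) \<le> (\<Sum>i<n. 1)"
      apply (rule sum_mono) using a b by (simp add: mult_le_one power_le_one)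
    then show ?thesis by simp
  qed
  have S0: "0 \<le> (\<Sum>i<n. b^(n - Suc i) * a^i)" using a b by (simp add: sum_nonneg)
  have key: "(a^n - b^n)*(a-b) \<le> real n * (a-b)^2"
  proof -
    have "(a^n - b^n)*(a-b) = (\<Sum>i<n. b^(n - Suc i) * a^i) * (a-b)^2" by (simp add: S power2_eq_square)
    also have "\<dots> \<le> real n * (a-b)^2" using S1 by (simp add: mult_right_mono)
    finally show ?thesis .
  qed
  obtain j where j: "k = Suc j" using assms(6) by (cases k) auto
  have nj: "n = Suc (2*j)" using j by (simp add: n_def)
  have pw: "\<And>c::real. (c^2)^j = c^(2*j)" by (simp add: power_mult)
  have pa: "\<alpha>^k = a * a^n" "\<alpha>^(k-1)*(a*b) = a^n * b"
    using a(3)[symmetric] pw[of a] by (simp_all add: j nj power2_eq_square algebra_simps)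
  have pb: "\<beta>^k = b * b^n" "\<beta>^(k-1)*(a*b) = a * b^n"
    using b(3)[symmetric] pw[of b] by (simp_all add: j nj power2_eq_square algebra_simps)
  have pk: "\<alpha>^k = \<alpha>^(k-1)*\<alpha>" "\<beta>^k = \<beta>^(k-1)*\<beta>"
    by (simp_all add: j)
  have E0: "(a^n - b^n)*(a-b) = a*a^n + b*b^n - a^n*b - a*b^n" by (simp add: algebra_simps)
  have E1: "(\<alpha>^(k-1) + \<beta>^(k-1))*(a*b) = \<alpha>^(k-1)*(a*b) + \<beta>^(k-1)*(a*b)" by (simp add: algebra_simps)
  have E: "(a^n - b^n)*(a-b) = \<alpha>^k + \<beta>^k - (\<alpha>^(k-1) + \<beta>^(k-1))*(a*b)"
    unfolding E0 E1 pa pb by simp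
  have ab2: "(a-b)^2 = \<alpha> + \<beta> - 2*(a*b)" using a b by (simp add: power2_eq_square algebra_simps)
  have "2*(\<alpha>^(k-1)*(\<alpha>-\<rho>) - \<beta>^(k-1)*(\<rho>-\<beta>)) = 2*(\<alpha>^k + \<beta>^k) - 2*\<rho>*(\<alpha>^(k-1) + \<beta>^(k-1))"
    using pk by (simp add: algebra_simps)
  then show ?thesis using R key E ab2 n by (simp add: algebra_simps)
qed

lemma onorm_mono_psd:
  fixes M1 M2 :: "real^'n^'n"
  assumes s1: "transpose M1 = M1" and p1: "\<forall>y. 0 \<le> y \<bullet> (M1 *v y)"
    and le: "\<forall>y. y \<bullet> (M1 *v y) \<le> y \<bullet> (M2 *v y)"
  shows "sigma_max M1 \<le> sigma_max M2"
proof -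
  define s1 where "s1 = sigma_max M1"
  define s2 where "s2 = sigma_max M2"
  have nb: "\<And>(M::real^'n^'n) x. norm (M *v x) \<le> sigma_max M * norm x"
    unfolding sigma_max_def using onorm[OF matrix_vector_mul_bounded_linear] by blast
  have s1p: "0 \<le> s1" unfolding s1_def sigma_max_def by (rule onorm_pos_le[OF matrix_vector_mul_bounded_linear])
  have s2p: "0 \<le> s2" unfolding s2_def sigma_max_def by (rule onorm_pos_le[OF matrix_vector_mul_bounded_linear])
  have qb: "\<And>(M::real^'n^'n) y. y \<bullet> (M *v y) \<le> sigma_max M * (norm y)^2"
  proof -
    fix M :: "real^'n^'n" and y
    have "y \<bullet> (M *v y) \<le> norm y * norm (M *v y)" by (rule Cauchy_Schwarz_ineq2[THEN order_trans[OF abs_ge_self]])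
    also have "\<dots> \<le> norm y * (sigma_max M * norm y)" by (rule mult_left_mono[OF nb]) simp
    finally show "y \<bullet> (M *v y) \<le> sigma_max M * (norm y)^2" by (simp add: power2_eq_square algebra_simps)
  qed
  have "norm (M1 *v x) \<le> sqrt (s1 * s2) * norm x" for x
  proof -
    define u where "u = M1 *v x"
    have uu: "(norm u)^2 = x \<bullet> (M1 *v u)"
      using sym_mv[OF s1, of x u] by (simp add: u_def power2_norm_eq_inner)
    have "((norm u)^2)^2 \<le> (x \<bullet> (M1 *v x)) * (u \<bullet> (M1 *v u))"
      unfolding uu by (rule psd_cs[OF s1 p1])
    also have "\<dots> \<le> (s2 * (norm x)^2) * (s1 * (norm u)^2)"
      apply (rule mult_mono)
      using le qb[of x M2] qb[of u M1] p1 s2p by (auto simp: s1_def s2_def intro: order_trans)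
    finally have h: "(norm u)^2 * (norm u)^2 \<le> (s1 * s2*(norm x)^2) * (norm u)^2"
      by (simp add: power2_eq_square algebra_simps)
    have "(norm u)^2 \<le> s1 * s2*(norm x)^2"
    proof (cases "norm u = 0")
      case True then show ?thesis using s1p s2p by simp
    next
      case False
      then have "0 < (norm u)^2" by simp
      then show ?thesis using h mult_le_cancel_right_pos by blast
    qed
    then have "sqrt ((norm u)^2) \<le> sqrt (s1 * s2*(norm x)^2)" by (rule real_sqrt_le_mono)
    then show ?thesis using s1p s2p by (simp add: u_def real_sqrt_mult)
  qed
  then have "s1 \<le> sqrt (s1 * s2)" unfolding s1_def sigma_max_def by (intro onorm_le) simp
  then have "s1^2 \<le> s1 * s2" using s1p s2p
    by (metis mult_nonneg_nonneg power_mono real_sqrt_pow2)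
  then have "s1 \<le> s2" using s1p s2p
    by (cases "s1 = 0") (auto simp: power2_eq_square mult_le_cancel_left)
  then show ?thesis by (simp add: s1_def s2_def)
qed

theorem lemma4:
  fixes Q A :: "real^'n^'n" and q v :: "real^'n" and m :: real
    and f g :: "real^'n \<Rightarrow> real" and J :: "nat \<Rightarrow> real^'n \<Rightarrow> real"
    and L :: "nat \<Rightarrow> real" and r :: real
    and x :: "nat \<Rightarrow> real^'n" and \<gamma> :: "nat \<Rightarrow> real"
  assumes Q_sym: "transpose Q = Q"
    and Q_psd: "\<forall>y. y \<bullet> (Q *v y) \<ge> 0"
    and A_sym: "transpose A = A"
    and A_pd: "\<forall>y. y \<noteq> 0 \<longrightarrow> y \<bullet> (A *v y) > 0"
    and f_def: "\<forall>y. f y = (1/2) * (y \<bullet> (Q *v y)) + q \<bullet> y"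
    and g_def: "\<forall>y. g y = (y - v) \<bullet> (A *v (y - v))"
    and J_def: "\<forall>k y. J k y = f y + (m / real k) * (g y) ^ k"
    and L_def: "\<forall>k. L k = sigma_max (Q + (m * (4 * real k - 2)) *\<^sub>R A)"
    and r_def: "r = sqrt (sigma_min A) / sigma_max A"
    and m_pos: "m > 0"
    and req2: "\<forall>y. g y = 1 \<longrightarrow>
        (norm (grad f y + m *\<^sub>R grad g y))\<^sup>2 * norm (grad g y)
          \<le> 2 * r * L 1 * ((grad f y + m *\<^sub>R grad g y) \<bullet> grad g y)"
    and x1: "g (x 1) \<le> 1"
    and iter: "\<forall>k\<ge>1. x (k + 1) = x k - \<gamma> k *\<^sub>R grad (J k) (x k)"
    and step: "\<forall>k\<ge>1. 0 < \<gamma> k \<and> \<gamma> k \<le> 1 / L k"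
    and sq_sum: "summable (\<lambda>k. (\<gamma> k)\<^sup>2)"
    and div_sum: "filterlim (\<lambda>n. \<Sum>k=1..n. \<gamma> k) at_top sequentially"
  shows "\<forall>k\<ge>1. J (k + 1) (x (k + 1)) \<le> J k (x (k + 1))
                 \<and> J k (x (k + 1)) \<le> J k (x k)"
  proof -
  have fe: "f = (\<lambda>y. (1/2) * (y \<bullet> (Q *v y)) + q \<bullet> y)" using f_def by auto
  have ge: "g = (\<lambda>y. (y - v) \<bullet> (A *v (y - v)))" using g_def by auto
  have Je: "\<And>k. J k = (\<lambda>y. f y + (m / real k) * (g y) ^ k)" using J_def by auto
  have A_psd: "\<forall>y. 0 \<le> y \<bullet> (A *v y)"
  proof
    fix y :: "real^'n" show "0 \<le> y \<bullet> (A *v y)" using A_pd by (cases "y = 0") (auto intro: less_imp_le)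
  qed
  have g_nn: "\<And>y. 0 \<le> g y" using A_psd g_def by auto
  have df: "\<And>y. (f has_derivative (\<lambda>h. (Q *v y + q) \<bullet> h)) (at y)"
  proof -
    fix y
    have "((\<lambda>y. (1/2) * (y \<bullet> (Q *v y)) + q \<bullet> y) has_derivative (\<lambda>h. (1/2)*(h \<bullet> (Q *v y) + y \<bullet> (Q *v h)) + q \<bullet> h)) (at y)"
      by (auto intro!: derivative_eq_intros bounded_linear.has_derivative[OF matrix_vector_mul_bounded_linear])
    moreover have "(\<lambda>h. (1/2)*(h \<bullet> (Q *v y) + y \<bullet> (Q *v h)) + q \<bullet> h) = (\<lambda>h. (Q *v y + q) \<bullet> h)"
      using sym_mv[OF Q_sym, of y] by (intro ext) (simp add: inner_add_left inner_add_right inner_commute)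
    ultimately show "(f has_derivative (\<lambda>h. (Q *v y + q) \<bullet> h)) (at y)" unfolding fe by simp
  qed
  have dg: "\<And>y. (g has_derivative (\<lambda>h. (2 *\<^sub>R (A *v (y - v))) \<bullet> h)) (at y)"
  proof -
    fix y
    have "((\<lambda>y. (y - v) \<bullet> (A *v (y - v))) has_derivative (\<lambda>h. h \<bullet> (A *v (y - v)) + (y - v) \<bullet> (A *v h))) (at y)"
      by (auto intro!: derivative_eq_intros bounded_linear.has_derivative[OF matrix_vector_mul_bounded_linear])
    moreover have "(\<lambda>h. h \<bullet> (A *v (y - v)) + (y - v) \<bullet> (A *v h)) = (\<lambda>h. (2 *\<^sub>R (A *v (y - v))) \<bullet> h)"
      using sym_mv[OF A_sym, of "y - v"] by (intro ext) (simp add: inner_commute)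
    ultimately show "(g has_derivative (\<lambda>h. (2 *\<^sub>R (A *v (y - v))) \<bullet> h)) (at y)" unfolding ge by simp
  qed
  define GJ where "GJ k y = Q *v y + q + (2*m*(g y)^(k-1)) *\<^sub>R (A *v (y - v))" for k y
  have dJ: "\<And>k y. k \<ge> 1 \<Longrightarrow> (J k has_derivative (\<lambda>h. GJ k y \<bullet> h)) (at y)"
  proof -
    fix k :: nat and y assume k: "k \<ge> 1"
    have "(J k has_derivative (\<lambda>h. (Q *v y + q) \<bullet> h + (m / real k) * (of_nat k * ((2 *\<^sub>R (A *v (y - v))) \<bullet> h) * g y ^ (k-1)))) (at y)"
      unfolding Je by (intro has_derivative_add[OF df] has_derivative_mult_right has_derivative_power dg)
    moreover have "(\<lambda>h. (Q *v y + q) \<bullet> h + (m / real k) * (of_nat k * ((2 *\<^sub>R (A *v (y - v))) \<bullet> h) * g y ^ (k-1))) = (\<lambda>h. GJ k y \<bullet> h)"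
      using k by (auto simp: GJ_def inner_add_left algebra_simps)
    ultimately show "(J k has_derivative (\<lambda>h. GJ k y \<bullet> h)) (at y)" by simp
  qed
  have gf: "\<And>y. grad f y = Q *v y + q" using grad_eq df by blast
  have gg: "\<And>y. grad g y = 2 *\<^sub>R (A *v (y - v))" using grad_eq dg by blast
  have gJ: "\<And>k y. k \<ge> 1 \<Longrightarrow> grad (J k) y = GJ k y" using grad_eq dJ by blast
  have nb: "\<And>(M::real^'n^'n) x. norm (M *v x) \<le> sigma_max M * norm x"
    unfolding sigma_max_def using onorm[OF matrix_vector_mul_bounded_linear] by blast
  have qb: "\<And>(M::real^'n^'n) y. y \<bullet> (M *v y) \<le> sigma_max M * (norm y)^2"
  proof -
    fix M :: "real^'n^'n" and y
    have "y \<bullet> (M *v y) \<le> norm y * norm (M *v y)" by (rule Cauchy_Schwarz_ineq2[THEN order_trans[OF abs_ge_self]])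
    also have "\<dots> \<le> norm y * (sigma_max M * norm y)" by (rule mult_left_mono[OF nb]) simp
    finally show "y \<bullet> (M *v y) \<le> sigma_max M * (norm y)^2" by (simp add: power2_eq_square algebra_simps)
  qed
  have smp: "\<And>M::real^'n^'n. 0 \<le> sigma_max M"
    unfolding sigma_max_def by (rule onorm_pos_le[OF matrix_vector_mul_bounded_linear])
  have K: "\<And>k a b. k \<ge> 1 \<Longrightarrow> g a \<le> 1 \<Longrightarrow> g b \<le> 1 \<Longrightarrow>
      (a - b) \<bullet> (GJ k a - GJ k b) \<le> L k * (norm (a - b))^2"
  proof -
    fix k :: nat and a b assume k: "k \<ge> 1" and ga: "g a \<le> 1" and gb: "g b \<le> 1"
    define p where "p = a - v"
    define r where "r = b - v"
    define d where "d = a - b"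
    have dpr: "d = p - r" by (simp add: p_def r_def d_def)
    define \<alpha> where "\<alpha> = p \<bullet> (A *v p)"
    define \<beta> where "\<beta> = r \<bullet> (A *v r)"
    define \<rho> where "\<rho> = p \<bullet> (A *v r)"
    have rp: "r \<bullet> (A *v p) = \<rho>" using sym_mv[OF A_sym, of r p] by (simp add: \<rho>_def)
    have al: "\<alpha> = g a" "\<beta> = g b" by (simp_all add: \<alpha>_def \<beta>_def p_def r_def g_def)
    have GJd: "GJ k a - GJ k b = Q *v d + (2*m*\<alpha>^(k-1)) *\<^sub>R (A *v p) - (2*m*\<beta>^(k-1)) *\<^sub>R (A *v r)"
      by (simp add: GJ_def al p_def r_def d_def matrix_vector_mult_diff_distrib)
    have e1: "d \<bullet> (A *v p) = \<alpha> - \<rho>" by (simp add: dpr inner_diff_left \<alpha>_def rp)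
    have e2: "d \<bullet> (A *v r) = \<rho> - \<beta>" by (simp add: dpr inner_diff_left \<beta>_def \<rho>_def)
    have e3: "d \<bullet> (A *v d) = \<alpha> - 2*\<rho> + \<beta>"
      by (simp add: dpr inner_diff_left inner_diff_right matrix_vector_mult_diff_distrib \<alpha>_def \<beta>_def \<rho>_def rp)
    have lhs: "d \<bullet> (GJ k a - GJ k b) = d \<bullet> (Q *v d) + m * (2*(\<alpha>^(k-1)*(\<alpha>-\<rho>) - \<beta>^(k-1)*(\<rho>-\<beta>)))"
      unfolding GJd by (simp add: inner_diff_right inner_add_right e1 e2 algebra_simps)
    have cs: "\<rho>^2 \<le> \<alpha> * \<beta>" unfolding \<rho>_def \<alpha>_def \<beta>_def by (rule psd_cs[OF A_sym A_psd])
    have sc: "2*(\<alpha>^(k-1)*(\<alpha>-\<rho>) - \<beta>^(k-1)*(\<rho>-\<beta>)) \<le> (4*real k-2)*(\<alpha> - 2*\<rho> + \<beta>)"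
      by (rule scal) (use al ga gb g_nn cs k in auto)
    define M where "M = Q + (m * (4 * real k - 2)) *\<^sub>R A"
    have Md: "d \<bullet> (M *v d) = d \<bullet> (Q *v d) + m * ((4*real k-2)*(\<alpha> - 2*\<rho> + \<beta>))"
      by (simp add: M_def matrix_vector_mult_add_rdistrib scaleR_matrix_vector_assoc[symmetric] inner_add_right e3)
    have "d \<bullet> (GJ k a - GJ k b) \<le> d \<bullet> (M *v d)"
      unfolding lhs Md using sc m_pos by simp
    also have "\<dots> \<le> sigma_max M * (norm d)^2" by (rule qb)
    finally show "(a - b) \<bullet> (GJ k a - GJ k b) \<le> L k * (norm (a - b))^2"
      by (simp add: L_def M_def d_def)
  qed
  have Lk: "\<And>k. k \<ge> 1 \<Longrightarrow> 0 < L k \<and> \<gamma> k * L k \<le> 1 \<and> 0 < \<gamma> k"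
  proof -
    fix k :: nat assume k: "k \<ge> 1"
    have g0: "0 < \<gamma> k" "\<gamma> k \<le> 1 / L k" using step k by auto
    have Lp: "0 < L k"
    proof (rule ccontr)
      assume "\<not> 0 < L k"
      then have "1 / L k \<le> 0" by (simp add: divide_nonneg_nonpos)
      then show False using g0 by linarith
    qed
    then show "0 < L k \<and> \<gamma> k * L k \<le> 1 \<and> 0 < \<gamma> k" using g0 by (simp add: pos_le_divide_eq)
  qed
  have Mexp: "\<And>c y. y \<bullet> ((Q + c *\<^sub>R A) *v y) = y \<bullet> (Q *v y) + c * (y \<bullet> (A *v y))"
    by (simp add: matrix_vector_mult_add_rdistrib scaleR_matrix_vector_assoc[symmetric] inner_add_right)
  have L1k: "\<And>k. k \<ge> 1 \<Longrightarrow> L 1 \<le> L k"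
  proof -
    fix k :: nat assume k: "k \<ge> 1"
    define c1 where "c1 = m * (4 * real (1::nat) - 2)"
    define c2 where "c2 = m * (4 * real k - 2)"
    have c: "0 \<le> c1" "c1 \<le> c2" using k m_pos by (simp_all add: c1_def c2_def)
    have tr: "transpose (Q + c1 *\<^sub>R A) = transpose Q + c1 *\<^sub>R transpose A"
      by (simp add: transpose_def vec_eq_iff)
    have "sigma_max (Q + c1 *\<^sub>R A) \<le> sigma_max (Q + c2 *\<^sub>R A)"
    proof (rule onorm_mono_psd)
      show "transpose (Q + c1 *\<^sub>R A) = Q + c1 *\<^sub>R A" using tr Q_sym A_sym by simp
      show "\<forall>y. 0 \<le> y \<bullet> ((Q + c1 *\<^sub>R A) *v y)" using Q_psd A_psd c unfolding Mexp by simp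
      show "\<forall>y. y \<bullet> ((Q + c1 *\<^sub>R A) *v y) \<le> y \<bullet> ((Q + c2 *\<^sub>R A) *v y)"
        using A_psd c unfolding Mexp by (simp add: mult_right_mono)
    qed
    then show "L 1 \<le> L k" by (simp add: L_def c1_def c2_def)
  qed
  define S where "S = {norm (A *v x) | x. norm x = 1}"
  have Sbdd: "bdd_below S" unfolding S_def by (rule bdd_belowI[of _ 0]) auto
  have smin0: "0 \<le> sigma_min A"
  proof -
    obtain e :: "real^'n" where "norm e = 1" using vector_choose_size[of 1] by auto
    then have "S \<noteq> {}" unfolding S_def by auto
    then show ?thesis unfolding sigma_min_def S_def[symmetric] by (rule cInf_greatest) (auto simp: S_def)
  qed
  have sminA: "\<And>d. d \<noteq> 0 \<Longrightarrow> sigma_min A * norm d \<le> norm (A *v d)"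
  proof -
    fix d :: "real^'n" assume d: "d \<noteq> 0"
    have "norm (A *v ((1 / norm d) *\<^sub>R d)) \<in> S" unfolding S_def using d by auto
    then have "sigma_min A \<le> norm (A *v ((1 / norm d) *\<^sub>R d))"
      unfolding sigma_min_def S_def[symmetric] by (rule cInf_lower[OF _ Sbdd])
    also have "\<dots> = norm (A *v d) / norm d" by (simp add: matrix_vector_mult_scaleR)
    finally show "sigma_min A * norm d \<le> norm (A *v d)" using d by (simp add: pos_le_divide_eq)
  qed
  have bnd: "\<And>k z. k \<ge> 1 \<Longrightarrow> g z = 1 \<Longrightarrow> g (z - \<gamma> k *\<^sub>R GJ k z) \<le> 1"
  proof -
    fix k :: nat and z assume k: "k \<ge> 1" and gz: "g z = 1"
    define d where "d = z - v"
    define w where "w = GJ k z"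
    define P where "P = 2 * (w \<bullet> (A *v d))"
    define c where "c = \<gamma> k"
    have cp: "0 < c" "c * L k \<le> 1" using Lk[OF k] by (auto simp: c_def)
    have dAd: "d \<bullet> (A *v d) = 1" using gz by (simp add: g_def d_def)
    have w_eq: "grad f z + m *\<^sub>R grad g z = w" by (simp add: w_def GJ_def gf gg gz d_def)
    have R2: "(norm w)^2 * norm (2 *\<^sub>R (A *v d)) \<le> 2 * r * L 1 * P"
      using req2[rule_format, OF gz] unfolding w_eq by (simp add: gg d_def P_def)
    have expand: "g (z - c *\<^sub>R w) = 1 - c * P + c^2 * (w \<bullet> (A *v w))"
    proof -
      have eq: "z - c *\<^sub>R w - v = d - c *\<^sub>R w" by (simp add: d_def)
      have "g (z - c *\<^sub>R w) = (d - c *\<^sub>R w) \<bullet> (A *v (d - c *\<^sub>R w))" unfolding ge by (simp only: eq)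
      also have "\<dots> = d \<bullet> (A *v d) - c * (d \<bullet> (A *v w)) - c * (w \<bullet> (A *v d)) + c^2 * (w \<bullet> (A *v w))"
        by (simp add: matrix_vector_mult_diff_distrib matrix_vector_mult_scaleR inner_diff_left inner_diff_right power2_eq_square algebra_simps)
      finally show ?thesis using sym_mv[OF A_sym, of d w] dAd by (simp add: P_def algebra_simps)
    qed
    have key: "c * (w \<bullet> (A *v w)) \<le> P"
    proof (cases "w = 0")
      case True then show ?thesis by (simp add: P_def)
    next
      case False
      have Ad0: "A *v d \<noteq> 0" using dAd by auto
      then have d0: "d \<noteq> 0" by auto
      have cs1: "1 \<le> norm d * norm (A *v d)" using norm_cauchy_schwarz[of d "A *v d"] dAd by simp
      have "sigma_min A \<le> sigma_min A * (norm d * norm (A *v d))" using cs1 smin0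
        by (metis mult_left_mono mult.right_neutral)
      also have "\<dots> \<le> norm (A *v d) * norm (A *v d)"
        using sminA[OF d0] by (simp add: mult.assoc[symmetric] mult_right_mono)
      finally have "sigma_min A \<le> (norm (A *v d))^2" by (simp add: power2_eq_square)
      then have nAd: "sqrt (sigma_min A) \<le> norm (A *v d)" by (simp add: real_le_lsqrt)
      have smaxpos: "0 < sigma_max A"
      proof (rule ccontr)
        assume "\<not> 0 < sigma_max A"
        then have "sigma_max A = 0" using smp[of A] by simp
        then show False using nb[of A d] Ad0 by simp
      qed
      have rs: "r * sigma_max A = sqrt (sigma_min A)" using r_def smaxpos by simp
      have r0: "0 \<le> r" using r_def smaxpos smin0 by simp
      have pos: "0 < (norm w)^2 * norm (2 *\<^sub>R (A *v d))" using False Ad0 by simp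
      then have RP: "0 < 2 * r * L 1 * P" using R2 by linarith
      have rp: "0 < r" using RP r0 by (cases "r = 0") auto
      have L10: "0 \<le> L 1" using L_def smp by simp
      have "0 < (2*r) * (L 1 * P)" using RP by (simp add: mult.assoc)
      then have "0 < L 1 * P" using rp zero_less_mult_pos by (metis mult_pos_pos zero_less_numeral)
      then have P0: "0 < P" using L10 by (simp add: zero_less_mult_iff)
      have "(norm w)^2 * (2 * (r * sigma_max A)) \<le> (norm w)^2 * norm (2 *\<^sub>R (A *v d))"
        using rs nAd by (simp add: mult_right_mono)
      then have "2 * r * (sigma_max A * (norm w)^2) \<le> 2 * r * (L 1 * P)" using R2 by (simp add: algebra_simps)
      then have Sx: "sigma_max A * (norm w)^2 \<le> L 1 * P" using rp by simp
      have "c * (w \<bullet> (A *v w)) \<le> c * (sigma_max A * (norm w)^2)" using qb[of w A] cp by simp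
      also have "\<dots> \<le> c * (L 1 * P)" using Sx cp by simp
      also have "\<dots> \<le> c * (L k * P)" using L1k[OF k] P0 cp by simp
      also have "\<dots> = (c * L k) * P" by simp
      also have "\<dots> \<le> 1 * P" using cp P0 by (intro mult_right_mono) auto
      finally show ?thesis by simp
    qed
    have "c^2 * (w \<bullet> (A *v w)) \<le> c * P" using key cp by (simp add: power2_eq_square mult.assoc mult_left_mono)
    then show "g (z - \<gamma> k *\<^sub>R GJ k z) \<le> 1" using expand by (simp add: c_def w_def)
  qed
  have conv: "\<And>a b t. g a \<le> 1 \<Longrightarrow> g b \<le> 1 \<Longrightarrow> 0 \<le> t \<Longrightarrow> t \<le> 1 \<Longrightarrow> g (a + t *\<^sub>R (b - a)) \<le> 1"
  proof -
    fix a b and t :: real assume ga: "g a \<le> 1" and gb: "g b \<le> 1" and t: "0 \<le> t" "t \<le> 1"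
    define p1 where "p1 = a - v"
    define p2 where "p2 = b - v"
    have eq: "a + t *\<^sub>R (b - a) - v = (1-t) *\<^sub>R p1 + t *\<^sub>R p2" by (simp add: algebra_simps p1_def p2_def)
    have s21: "p2 \<bullet> (A *v p1) = p1 \<bullet> (A *v p2)" using sym_mv[OF A_sym] by simp
    have "g (a + t *\<^sub>R (b - a)) = ((1-t) *\<^sub>R p1 + t *\<^sub>R p2) \<bullet> (A *v ((1-t) *\<^sub>R p1 + t *\<^sub>R p2))"
      unfolding ge by (simp only: eq)
    also have "\<dots> = (1-t)^2 * (p1 \<bullet> (A *v p1)) + t*(1-t) * (2 * (p1 \<bullet> (A *v p2))) + t^2 * (p2 \<bullet> (A *v p2))"
      by (simp add: matrix_vector_right_distrib matrix_vector_mult_scaleR inner_add_left inner_add_right s21 power2_eq_square algebra_simps)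
    also have "\<dots> \<le> (1-t)^2 * (p1 \<bullet> (A *v p1)) + t*(1-t) * (p1 \<bullet> (A *v p1) + p2 \<bullet> (A *v p2)) + t^2 * (p2 \<bullet> (A *v p2))"
      using psd_half[OF A_sym A_psd, of p1 p2] t by (simp add: mult_left_mono)
    also have "\<dots> = (1-t) * g a + t * g b" by (simp add: g_def p1_def p2_def power2_eq_square algebra_simps)
    also have "\<dots> \<le> (1-t) * 1 + t * 1" using ga gb t by (intro add_mono mult_left_mono) auto
    finally show "g (a + t *\<^sub>R (b - a)) \<le> 1" by simp
  qed
  have inv1: "\<And>k x0. k \<ge> 1 \<Longrightarrow> g x0 \<le> 1 \<Longrightarrow> g (x0 - \<gamma> k *\<^sub>R GJ k x0) \<le> 1"
  proof (rule ccontr)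
    fix k :: nat and x0 assume k: "k \<ge> 1" and gx: "g x0 \<le> 1" and ng: "\<not> g (x0 - \<gamma> k *\<^sub>R GJ k x0) \<le> 1"
    have cp: "0 < \<gamma> k" "\<gamma> k * L k \<le> 1" using Lk[OF k] by auto
    define y where "y = x0 - \<gamma> k *\<^sub>R GJ k x0"
    define G where "G = g y"
    have G1: "G > 1" using ng by (simp add: G_def y_def)
    define n where "n = A *v (y - v)"
    have ny: "(y - v) \<bullet> n = G" by (simp add: n_def G_def g_def)
    have n0: "n \<noteq> 0" using ny G1 by auto
    define p0 where "p0 = x0 - v"
    define c1 where "c1 = 2 * (n \<bullet> (A *v p0))"
    define c2 where "c2 = n \<bullet> (A *v n)"
    have c2p: "c2 > 0" using A_pd n0 by (simp add: c2_def)
    have s0: "p0 \<bullet> (A *v n) = n \<bullet> (A *v p0)" using sym_mv[OF A_sym] by simp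
    have hexp: "\<And>t. g (x0 + t *\<^sub>R n) = g x0 + t * c1 + t^2 * c2"
    proof -
      fix t :: real
      have eq: "x0 + t *\<^sub>R n - v = p0 + t *\<^sub>R n" by (simp add: p0_def algebra_simps)
      have "g (x0 + t *\<^sub>R n) = (p0 + t *\<^sub>R n) \<bullet> (A *v (p0 + t *\<^sub>R n))" unfolding ge by (simp only: eq)
      also have "\<dots> = p0 \<bullet> (A *v p0) + t * c1 + t^2 * c2"
        by (simp add: matrix_vector_right_distrib matrix_vector_mult_scaleR inner_add_left inner_add_right s0
            power2_eq_square algebra_simps c1_def c2_def)
      also have "p0 \<bullet> (A *v p0) = g x0" by (simp add: g_def p0_def)
      finally show "g (x0 + t *\<^sub>R n) = g x0 + t * c1 + t^2 * c2" .
    qed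
    define t0 where "t0 = (2*\<bar>c1\<bar>+1)/c2 + 1"
    have t0c: "t0 * c2 = 2*\<bar>c1\<bar> + 1 + c2" using c2p by (simp add: t0_def field_simps)
    have t01: "1 \<le> t0" using c2p by (simp add: t0_def)
    have "1 \<le> t0 * (t0 * c2 - \<bar>c1\<bar>)"
    proof -
      have "1 \<le> t0 * c2 - \<bar>c1\<bar>" using t0c c2p by simp
      then show ?thesis using t01 by (metis mult_mono mult_1 zero_le_one order_trans)
    qed
    also have "\<dots> \<le> g x0 + t0 * c1 + t0^2 * c2"
    proof -
      have "t0 * (- \<bar>c1\<bar>) \<le> t0 * c1" using t01 by (intro mult_left_mono) auto
      then show ?thesis using g_nn[of x0] by (simp add: power2_eq_square algebra_simps)
    qed
    finally have h1: "1 \<le> g (x0 + t0 *\<^sub>R n)" using hexp by simp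
    have hc: "continuous_on {0..t0} (\<lambda>t. g (x0 + t *\<^sub>R n))"
      unfolding hexp by (intro continuous_intros)
    obtain t where t: "0 \<le> t" "t \<le> t0" "g (x0 + t *\<^sub>R n) = 1"
      using IVT'[of "\<lambda>t. g (x0 + t *\<^sub>R n)" 0 1 t0, OF _ h1 _ hc] gx t01 by auto
    define z where "z = x0 + t *\<^sub>R n"
    have gz: "g z = 1" using t by (simp add: z_def)
    define Tz where "Tz = z - \<gamma> k *\<^sub>R GJ k z"
    have gTz: "g Tz \<le> 1" using bnd[OF k gz] by (simp add: Tz_def)
    have mono: "n \<bullet> y \<le> n \<bullet> Tz"
    proof (cases "t = 0")
      case True then show ?thesis by (simp add: z_def Tz_def y_def)
    next
      case False then have tp: "t > 0" using t by simp
      have "(z - x0) \<bullet> (GJ k z - GJ k x0) \<le> L k * (norm (z - x0))^2" using K[OF k] gz gx by simp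
      then have "t * (n \<bullet> (GJ k z - GJ k x0)) \<le> t * (L k * t * (norm n)^2)"
        using tp by (simp add: z_def power2_eq_square algebra_simps)
      then have D: "n \<bullet> (GJ k z - GJ k x0) \<le> L k * t * (norm n)^2" using tp by simp
      have "\<gamma> k * (n \<bullet> (GJ k z - GJ k x0)) \<le> \<gamma> k * (L k * t * (norm n)^2)"
        using D cp by (simp add: mult_left_mono)
      also have "\<dots> = (\<gamma> k * L k) * (t * (norm n)^2)" by simp
      also have "\<dots> \<le> 1 * (t * (norm n)^2)" using cp tp by (intro mult_right_mono) auto
      finally have E: "\<gamma> k * (n \<bullet> (GJ k z - GJ k x0)) \<le> t * (norm n)^2" by simp
      have "n \<bullet> Tz - n \<bullet> y = t * (norm n)^2 - \<gamma> k * (n \<bullet> (GJ k z - GJ k x0))"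
        by (simp add: Tz_def y_def z_def inner_diff_right inner_add_right power2_norm_eq_inner algebra_simps)
      then show ?thesis using E by linarith
    qed
    have sep: "2 * ((Tz - v) \<bullet> n) \<le> g Tz + G"
      using psd_half[OF A_sym A_psd, of "Tz - v" "y - v"] by (simp add: n_def g_def G_def)
    have "(Tz - v) \<bullet> n < (y - v) \<bullet> n" using sep gTz G1 ny by linarith
    then have "n \<bullet> (Tz - v) < n \<bullet> (y - v)" by (simp add: inner_commute)
    then have "n \<bullet> Tz < n \<bullet> y" by (simp add: inner_diff_right)
    then show False using mono by linarith
  qed
  have desc: "\<And>k x0. k \<ge> 1 \<Longrightarrow> g x0 \<le> 1 \<Longrightarrow> J k (x0 - \<gamma> k *\<^sub>R GJ k x0) \<le> J k x0"
  proof -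
    fix k :: nat and x0 assume k: "k \<ge> 1" and gx: "g x0 \<le> 1"
    have cp: "0 < \<gamma> k" "\<gamma> k * L k \<le> 1" "0 < L k" using Lk[OF k] by auto
    define y where "y = x0 - \<gamma> k *\<^sub>R GJ k x0"
    have gy: "g y \<le> 1" using inv1[OF k gx] by (simp add: y_def)
    define d where "d = y - x0"
    define \<phi> where "\<phi> t = J k (x0 + t *\<^sub>R d) - t * (GJ k x0 \<bullet> d) - (L k / 2) * t^2 * (norm d)^2" for t
    have "\<phi> 1 \<le> \<phi> 0"
    proof (rule DERIV_nonpos_imp_nonincreasing[of 0 1 \<phi>])
      fix t :: real assume t: "0 \<le> t" "t \<le> 1"
      have dl: "((\<lambda>t. x0 + t *\<^sub>R d) has_derivative (\<lambda>h. h *\<^sub>R d)) (at t)" by (auto intro!: derivative_eq_intros)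
      have dJt: "((\<lambda>t. J k (x0 + t *\<^sub>R d)) has_derivative (\<lambda>h. GJ k (x0 + t *\<^sub>R d) \<bullet> (h *\<^sub>R d))) (at t)"
        using has_derivative_compose[OF dl dJ[OF k]] by simp
      have D1: "((\<lambda>t. J k (x0 + t *\<^sub>R d)) has_real_derivative (GJ k (x0 + t *\<^sub>R d) \<bullet> d)) (at t)"
      proof -
        have "(\<lambda>h. GJ k (x0 + t *\<^sub>R d) \<bullet> (h *\<^sub>R d)) = (*) (GJ k (x0 + t *\<^sub>R d) \<bullet> d)"
          by (rule ext) (simp add: mult.commute)
        then show ?thesis unfolding has_field_derivative_def using dJt by simp
      qed
      have D2: "(\<phi> has_real_derivative (GJ k (x0 + t *\<^sub>R d) \<bullet> d - GJ k x0 \<bullet> d - L k * t * (norm d)^2)) (at t)"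
        unfolding \<phi>_def[abs_def] by (auto intro!: derivative_eq_intros D1)
      have le: "GJ k (x0 + t *\<^sub>R d) \<bullet> d - GJ k x0 \<bullet> d - L k * t * (norm d)^2 \<le> 0"
      proof (cases "t = 0")
        case True then show ?thesis by simp
      next
        case False then have tp: "0 < t" using t by simp
        have ga: "g (x0 + t *\<^sub>R d) \<le> 1" using conv[OF gx gy t] by (simp add: d_def)
        have "(x0 + t *\<^sub>R d - x0) \<bullet> (GJ k (x0 + t *\<^sub>R d) - GJ k x0) \<le> L k * (norm (x0 + t *\<^sub>R d - x0))^2"
          by (rule K[OF k ga gx])
        then have "t * (d \<bullet> (GJ k (x0 + t *\<^sub>R d) - GJ k x0)) \<le> t * (L k * t * (norm d)^2)"
          using tp by (simp add: power2_eq_square algebra_simps)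
        then have "d \<bullet> (GJ k (x0 + t *\<^sub>R d) - GJ k x0) \<le> L k * t * (norm d)^2" using tp by simp
        then show ?thesis by (simp add: inner_diff_right inner_commute)
      qed
      show "\<exists>y. (\<phi> has_real_derivative y) (at t) \<and> y \<le> 0" using D2 le by blast
    qed simp
    then have "J k y - GJ k x0 \<bullet> d - (L k / 2) * (norm d)^2 \<le> J k x0" by (simp add: \<phi>_def d_def)
    moreover have "GJ k x0 \<bullet> d = - \<gamma> k * (norm (GJ k x0))^2"
      by (simp add: d_def y_def power2_norm_eq_inner)
    moreover have "(norm d)^2 = (\<gamma> k)^2 * (norm (GJ k x0))^2"
      by (simp add: d_def y_def power_mult_distrib)
    moreover have "(L k / 2) * ((\<gamma> k)^2 * (norm (GJ k x0))^2) \<le> \<gamma> k * (norm (GJ k x0))^2"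
    proof -
      have "(L k / 2) * ((\<gamma> k)^2 * (norm (GJ k x0))^2) = (\<gamma> k * L k) * (\<gamma> k * (norm (GJ k x0))^2) / 2"
        by (simp add: power2_eq_square)
      also have "\<dots> \<le> 1 * (\<gamma> k * (norm (GJ k x0))^2) / 2"
        using cp by (intro divide_right_mono mult_right_mono) auto
      also have "\<dots> \<le> \<gamma> k * (norm (GJ k x0))^2" using cp by simp
      finally show ?thesis .
    qed
    ultimately have "(L k / 2) * (norm d)^2 \<le> \<gamma> k * (norm (GJ k x0))^2"
      and "J k y - GJ k x0 \<bullet> d - (L k / 2) * (norm d)^2 \<le> J k x0"
      and "GJ k x0 \<bullet> d = - \<gamma> k * (norm (GJ k x0))^2" by simp_all
    then show "J k (x0 - \<gamma> k *\<^sub>R GJ k x0) \<le> J k x0" unfolding y_def by linarith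
  qed
  have iterk: "\<And>k. k \<ge> 1 \<Longrightarrow> x (k+1) = x k - \<gamma> k *\<^sub>R GJ k (x k)" using iter gJ by simp
  have inv: "\<And>k. k \<ge> 1 \<Longrightarrow> g (x k) \<le> 1"
  proof -
    fix k :: nat assume "k \<ge> 1"
    then show "g (x k) \<le> 1"
    proof (induction k rule: nat_induct_at_least)
      case base then show ?case using x1 by simp
    next
      case (Suc k) then show ?case using inv1[of k "x k"] iterk[of k] by simp
    qed
  qed
  show ?thesis
  proof (intro allI impI conjI)
    fix k :: nat assume k: "k \<ge> 1"
    define G where "G = g (x (k+1))"
    have gy: "G \<le> 1" "0 \<le> G" using inv[of "k+1"] k g_nn by (auto simp: G_def)
    have "G ^ (k+1) \<le> G ^ k" using gy by (simp add: mult_left_le_one_le)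
    moreover have "m / real (k+1) \<le> m / real k" using m_pos k by (intro divide_left_mono) auto
    ultimately have "(m / real (k+1)) * G ^ (k+1) \<le> (m / real k) * G ^ k"
      using gy m_pos by (intro mult_mono) auto
    then show "J (k + 1) (x (k + 1)) \<le> J k (x (k + 1))" by (simp add: J_def G_def)
    show "J k (x (k + 1)) \<le> J k (x k)" using desc[OF k inv[OF k]] iterk[OF k] by simp
  qed
qed

end
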